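(* Let $a_c>b_c>0$, $k_e>0$, $a_e^2=a_c^2+k_e$, $b_e^2=b_c^2+k_e$, let $c$ be the ellipse $x^2/a_c^2+y^2/b_c^2=1$ and $e$ the ellipse $x^2/a_e^2+y^2/b_e^2=1$. Let $P_1P_2\dots P_N$ be an $N$-sided periodic billiard in $e$ with caustic $c$, let $Q_i$ be the contact point of $[P_i,P_{i+1}]$ with $c$, and put $l_i=\overline{P_iQ_i}$, $r_i=\overline{P_iQ_{i-1}}$ (indices modulo $N$). If $N=2n$, then $r_{i+n}=r_i$ and $l_{i+n}=l_i$ for all $i$. If $N=2n+1$, then $r_{i+n}=l_{i-1}$ and $l_{i+n}=r_i$ for all $i$; consequently, for odd $N$, $$\sum_{i=1}^N l_i=\sum_{i=1}^N r_i=\frac{L_e}{2},$$ where $L_e=\sum_{i=1}^N\overline{P_iP_{i+1}}$ is the perimeter of the billiard.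
   Context: A billiard in $e$ with caustic $c$ is a sequence $(P_i)_{i\in\mathbb Z}$ of points of $e$ with $P_{i+1}\neq P_i$ such that every line $[P_i,P_{i+1}]$ is tangent to $c$ and $[P_{i-1},P_i]\neq[P_i,P_{i+1}]$; it is $N$-sided periodic if $P_{i+N}=P_i$ for all $i$, $N$ being the least such positive integer. $\overline{XY}$ denotes Euclidean distance. *)

theory Defs
  imports "HOL-Analysis.Analysis"
begin

text \<open>Points of the plane are pairs of reals; dist on real * real is the Euclidean distance.\<close>

definition on_ellipse :: "real \<Rightarrow> real \<Rightarrow> real \<times> real \<Rightarrow> bool" where
  "on_ellipse a b X \<longleftrightarrow> (fst X)^2 / a^2 + (snd X)^2 / b^2 = 1"

definition line_through :: "real \<times> real \<Rightarrow> real \<times> real \<Rightarrow> (real \<times> real) set" where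
  "line_through A B = {X. \<exists>t::real. X = A + t *\<^sub>R (B - A)}"

text \<open>A line is tangent to the (convex) ellipse at Q iff it meets the ellipse exactly in Q.\<close>
definition tangent_at :: "real \<Rightarrow> real \<Rightarrow> (real \<times> real) set \<Rightarrow> real \<times> real \<Rightarrow> bool" where
  "tangent_at a b L Q \<longleftrightarrow> L \<inter> {X. on_ellipse a b X} = {Q}"

definition is_tangent :: "real \<Rightarrow> real \<Rightarrow> (real \<times> real) set \<Rightarrow> bool" where
  "is_tangent a b L \<longleftrightarrow> (\<exists>Q. tangent_at a b L Q)"

definition billiard :: "real \<Rightarrow> real \<Rightarrow> real \<Rightarrow> real \<Rightarrow> (int \<Rightarrow> real \<times> real) \<Rightarrow> bool" where
  "billiard ae be ac bc P \<longleftrightarrow>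
     (\<forall>i. on_ellipse ae be (P i)) \<and>
     (\<forall>i. P (i + 1) \<noteq> P i) \<and>
     (\<forall>i. is_tangent ac bc (line_through (P i) (P (i + 1)))) \<and>
     (\<forall>i. line_through (P (i - 1)) (P i) \<noteq> line_through (P i) (P (i + 1)))"

definition periodic_billiard :: "real \<Rightarrow> real \<Rightarrow> real \<Rightarrow> real \<Rightarrow> (int \<Rightarrow> real \<times> real) \<Rightarrow> nat \<Rightarrow> bool" where
  "periodic_billiard ae be ac bc P N \<longleftrightarrow>
     billiard ae be ac bc P \<and> N > 0 \<and> (\<forall>i. P (i + int N) = P i) \<and>
     (\<forall>m. 0 < m \<and> m < N \<longrightarrow> (\<exists>i. P (i + int m) \<noteq> P i))"

end

theory Submission
  imports Defs
begin



locale conf =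
  fixes ac bc :: real
  assumes bc_pos: "0 < bc" and bc_lt: "bc < ac"
begin

lemma ac_pos: "0 < ac" using bc_pos bc_lt by simp

definition al :: "real \<Rightarrow> real" where "al k = ac^2/(ac^2+k)"
definition be :: "real \<Rightarrow> real" where "be k = bc^2/(bc^2+k)"
definition ka :: "real \<Rightarrow> real" where "ka k = sqrt (k/((ac^2+k)*(bc^2+k)))"
definition w :: "real \<Rightarrow> real" where "w t = sqrt (ac^2*(sin t)^2 + bc^2*(cos t)^2)"
definition WW :: "real \<Rightarrow> real \<Rightarrow> real" where "WW k t = al k*(sin t)^2 + be k*(cos t)^2"
definition Tp :: "real \<Rightarrow> real \<Rightarrow> real" where
  "Tp k t = (sin t*cos t*(al k - be k) + ka k * w t)/WW k t"
definition tau :: "real \<Rightarrow> real \<Rightarrow> real" where "tau k t = t + 2*arctan (Tp k t)"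
definition Phi :: "real \<Rightarrow> real \<Rightarrow> real \<Rightarrow> real" where
  "Phi k t T = WW k t * T^2 - 2 * sin t * cos t * (al k - be k) * T + (al k*(cos t)^2 + be k*(sin t)^2 - 1)"

lemma pa: "k > 0 \<Longrightarrow> ac^2 + k > 0" using ac_pos by (simp add: add_pos_pos)
lemma pb: "k > 0 \<Longrightarrow> bc^2 + k > 0" using bc_pos by (simp add: add_pos_pos)

lemma al_bounds: "k > 0 \<Longrightarrow> 0 < al k \<and> al k < 1"
  using ac_pos pa[of k] by (auto simp: al_def field_simps)
lemma be_bounds: "k > 0 \<Longrightarrow> 0 < be k \<and> be k < 1"
  using bc_pos pb[of k] by (auto simp: be_def field_simps)

lemma w2: "(w t)^2 = ac^2*(sin t)^2 + bc^2*(cos t)^2"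
  unfolding w_def by (simp add: add_nonneg_nonneg)

lemma w_pos: "w t > 0"
proof -
  have "bc^2*(sin t)^2 \<le> ac^2*(sin t)^2"
    using bc_lt bc_pos by (intro mult_right_mono power_mono) auto
  moreover have "bc^2*(sin t)^2 + bc^2*(cos t)^2 = bc^2 * ((sin t)^2 + (cos t)^2)" by (simp only: distrib_left)
  moreover have "bc^2 * ((sin t)^2 + (cos t)^2) = bc^2" by simp
  moreover have "bc^2 > 0" using bc_pos by simp
  ultimately have "ac^2*(sin t)^2 + bc^2*(cos t)^2 > 0" by linarith
  then show ?thesis unfolding w_def by simp
qed

lemma ka_pos: "k > 0 \<Longrightarrow> ka k > 0"
  using pa[of k] pb[of k] unfolding ka_def by (auto intro!: divide_pos_pos)

lemma ka2: "k > 0 \<Longrightarrow> (ka k)^2 = k/((ac^2+k)*(bc^2+k))"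
  using ac_pos bc_pos unfolding ka_def by (simp add: add_pos_pos less_imp_le)

lemma al_be_diff: "k > 0 \<Longrightarrow> al k - be k = (ka k)^2 * (ac^2 - bc^2)"
proof -
  assume k: "k > 0"
  have a: "ac^2+k \<noteq> 0" "bc^2+k \<noteq> 0" using pa[OF k] pb[OF k] by auto
  have "al k - be k = (ac^2*(bc^2+k) - bc^2*(ac^2+k))/((ac^2+k)*(bc^2+k))"
    using a by (simp add: al_def be_def field_simps)
  also have "ac^2*(bc^2+k) - bc^2*(ac^2+k) = k*(ac^2-bc^2)" by (simp add: algebra_simps)
  finally show ?thesis by (simp add: ka2[OF k])
qed

lemma WW_pos: "k > 0 \<Longrightarrow> WW k t > 0"
proof -
  assume k: "k > 0"
  have "WW k t \<ge> min (al k) (be k) * ((sin t)^2 + (cos t)^2)"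
    unfolding WW_def distrib_left
    by (intro add_mono mult_right_mono) auto
  moreover have "min (al k) (be k) > 0" using al_bounds[OF k] be_bounds[OF k] by simp
  moreover have "min (al k) (be k) * ((sin t)^2 + (cos t)^2) = min (al k) (be k)" by simp
  ultimately show ?thesis by linarith
qed

lemma key: "k > 0 \<Longrightarrow> (ka k)^2 * (w t)^2 = WW k t - al k * be k"
proof -
  assume k: "k > 0"
  define S where "S = (sin t)^2"
  define C where "C = (cos t)^2"
  have SC: "S + C = 1" by (simp add: S_def C_def)
  have a: "ac^2+k \<noteq> 0" "bc^2+k \<noteq> 0" using pa[OF k] pb[OF k] by auto
  have e1: "WW k t = (ac^2*S*(bc^2+k) + bc^2*C*(ac^2+k))/((ac^2+k)*(bc^2+k))"
    unfolding WW_def al_def be_def S_def C_def using a by (simp add: field_simps)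
  have e2: "al k * be k = ac^2*bc^2/((ac^2+k)*(bc^2+k))" by (simp add: al_def be_def)
  have "WW k t - al k * be k = (ac^2*S*(bc^2+k) + bc^2*C*(ac^2+k) - ac^2*bc^2)/((ac^2+k)*(bc^2+k))"
    unfolding e1 e2 by (simp add: diff_divide_distrib)
  also have "ac^2*S*(bc^2+k) + bc^2*C*(ac^2+k) - ac^2*bc^2 = ac^2*bc^2*(S+C-1) + k*(ac^2*S + bc^2*C)"
    by (simp add: algebra_simps)
  also have "\<dots> = k*(ac^2*S + bc^2*C)" using SC by simp
  finally show ?thesis unfolding ka2[OF k] w2 S_def C_def by simp
qed

end



lemma alg_WW: fixes c s a b :: real assumes "c^2 + s^2 = 1"
  shows "(a * s^2 + b * c^2) * (a * c^2 + b * s^2) = a * b + s^2 * c^2 * (a - b)^2"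
proof -
  have "(a * s^2 + b * c^2) * (a * c^2 + b * s^2) = a * b * (c^2 + s^2)^2 + s^2 * c^2 * (a - b)^2"
    by (simp add: algebra_simps power2_eq_square)
  then show ?thesis using assms by simp
qed

lemma alg_back: fixes c s a b T p C' S' :: real assumes h: "c^2 + s^2 = 1"
  and pd: "p = 1 + T^2" and Cd: "C' = c * (1 - T^2) - 2 * s * T" and Sd: "S' = s * (1 - T^2) + 2 * c * T"
  shows "(a * S'^2 + b * C'^2) * T^2 + 2 * S' * C' * (a - b) * T + (a * C'^2 + b * S'^2) - p^2
       = p^2 * ((a * s^2 + b * c^2) * T^2 - 2 * s * c * (a - b) * T + (a * c^2 + b * s^2 - 1))"
proof -
  have "(a * S'^2 + b * C'^2) * T^2 + 2 * S' * C' * (a - b) * T + (a * C'^2 + b * S'^2) - p^2 * (c^2 + s^2)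
       = p^2 * ((a * s^2 + b * c^2) * T^2 - 2 * s * c * (a - b) * T + (a * c^2 + b * s^2) - (c^2 + s^2))"
    unfolding pd Cd Sd by (simp add: algebra_simps power2_eq_square)
  then show ?thesis using h by simp
qed

lemma alg_deriv: fixes c s a b T :: real
  defines "p \<equiv> 1 + T^2"
  defines "C' \<equiv> c * (1 - T^2) - 2 * s * T"
  defines "S' \<equiv> s * (1 - T^2) + 2 * c * T"
  shows "((T * (a * s^2 + b * c^2) - s * c * (a - b)) * p - 2 * (a - b) * (s * c * T^2 - (c^2 - s^2) * T - s * c)) * p
       = T * (a * S'^2 + b * C'^2) + S' * C' * (a - b)"
  unfolding p_def C'_def S'_def by (simp add: algebra_simps power2_eq_square)




lemma cos_2arctan: "cos (2 * arctan T) = (1 - T^2) / (1 + T^2)"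
proof -
  have p: "1 + T^2 > 0" by (simp add: add_pos_nonneg)
  have "cos (2 * arctan T) = (cos (arctan T))^2 - (sin (arctan T))^2" by (simp add: cos_double)
  also have "\<dots> = (1 - T^2) / (1 + T^2)"
    unfolding cos_arctan sin_arctan using p by (simp add: power_divide diff_divide_distrib)
  finally show ?thesis .
qed

lemma sin_2arctan: "sin (2 * arctan T) = 2 * T / (1 + T^2)"
proof -
  have p: "1 + T^2 > 0" by (simp add: add_pos_nonneg)
  have "sin (2 * arctan T) = 2 * sin (arctan T) * cos (arctan T)" by (simp add: sin_double)
  also have "\<dots> = 2 * T / (1 + T^2)"
    unfolding cos_arctan sin_arctan using p
    by (simp add: field_simps)
  finally show ?thesis .
qed

lemma cos_plus_2arctan: "cos (t + 2 * arctan T) = (cos t * (1 - T^2) - 2 * sin t * T) / (1 + T^2)"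
proof -
  have p0: "1 + T^2 > 0" by (simp add: add_pos_nonneg)
  then have p: "1 + T^2 \<noteq> 0" by simp
  have "cos t * ((1 - T^2) / (1 + T^2)) - sin t * (2 * T / (1 + T^2)) = (cos t * (1 - T^2)) / (1 + T^2) - (2 * sin t * T) / (1 + T^2)"
    by (simp add: mult.commute mult.left_commute)
  then show ?thesis unfolding cos_add cos_2arctan sin_2arctan by (simp only: diff_divide_distrib)
qed
lemma sin_plus_2arctan: "sin (t + 2 * arctan T) = (sin t * (1 - T^2) + 2 * cos t * T) / (1 + T^2)"
proof -
  have p0: "1 + T^2 > 0" by (simp add: add_pos_nonneg)
  then have p: "1 + T^2 \<noteq> 0" by simp
  have "sin t * ((1 - T^2) / (1 + T^2)) + cos t * (2 * T / (1 + T^2)) = (sin t * (1 - T^2)) / (1 + T^2) + (2 * cos t * T) / (1 + T^2)"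
    by (simp add: mult.commute mult.left_commute)
  then show ?thesis unfolding sin_add cos_2arctan sin_2arctan by (simp only: add_divide_distrib)
qed

context conf
begin

abbreviation xx :: "real \<Rightarrow> real \<Rightarrow> real" where "xx k t \<equiv> sin t * cos t * (al k - be k)"

lemma lt_one: "k > 0 \<Longrightarrow> al k * (cos t)^2 + be k * (sin t)^2 < 1"
proof -
  assume k: "k > 0"
  have "(1 - al k) * (cos t)^2 + (1 - be k) * (sin t)^2 \<ge> min (1 - al k) (1 - be k) * ((cos t)^2 + (sin t)^2)"
    unfolding distrib_left by (intro add_mono mult_right_mono) auto
  moreover have "min (1 - al k) (1 - be k) > 0" using al_bounds[OF k] be_bounds[OF k] by simp
  moreover have "min (1 - al k) (1 - be k) * ((cos t)^2 + (sin t)^2) = min (1 - al k) (1 - be k)" by simp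
  moreover have "(1 - al k) * (cos t)^2 + (1 - be k) * (sin t)^2 = 1 - (al k * (cos t)^2 + be k * (sin t)^2)"
    by (simp add: algebra_simps)
  ultimately show ?thesis by linarith
qed

lemma disc: "k > 0 \<Longrightarrow> (ka k * w t)^2 - (xx k t)^2 = WW k t * (1 - al k * (cos t)^2 - be k * (sin t)^2)"
proof -
  assume k: "k > 0"
  have h: "(cos t)^2 + (sin t)^2 = 1" by simp
  have "(ka k * w t)^2 = WW k t - al k * be k" using key[OF k] by (simp add: power_mult_distrib)
  moreover have "WW k t * (al k * (cos t)^2 + be k * (sin t)^2) = al k * be k + (sin t)^2 * (cos t)^2 * (al k - be k)^2"
    unfolding WW_def by (rule alg_WW[OF h])
  moreover have "(xx k t)^2 = (sin t)^2 * (cos t)^2 * (al k - be k)^2" by (simp add: power_mult_distrib)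
  moreover have "WW k t * (1 - al k * (cos t)^2 - be k * (sin t)^2) = WW k t - WW k t * (al k * (cos t)^2 + be k * (sin t)^2)"
    by (simp add: algebra_simps)
  ultimately show ?thesis by linarith
qed

lemma kw_pos: "k > 0 \<Longrightarrow> ka k * w t > 0"
  using ka_pos w_pos by simp

lemma xx_lt: "k > 0 \<Longrightarrow> \<bar>xx k t\<bar> < ka k * w t"
proof -
  assume k: "k > 0"
  have "WW k t * (1 - al k * (cos t)^2 - be k * (sin t)^2) > 0"
    using WW_pos[OF k] lt_one[OF k, of t] by simp
  then have "(\<bar>xx k t\<bar>)^2 < (ka k * w t)^2" using disc[OF k, of t] by simp
  then show ?thesis using kw_pos[OF k, of t] by (meson abs_ge_zero power2_less_imp_less less_imp_le)
qed

lemma Tp_pos: "k > 0 \<Longrightarrow> Tp k t > 0"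
proof -
  assume k: "k > 0"
  have "xx k t + ka k * w t > 0" using xx_lt[OF k, of t] by linarith
  then show ?thesis unfolding Tp_def using WW_pos[OF k] by simp
qed

lemma W_Phi: "k > 0 \<Longrightarrow> WW k t * Phi k t T = (WW k t * T - xx k t)^2 - (ka k * w t)^2"
proof -
  assume k: "k > 0"
  have "WW k t * Phi k t T = (WW k t * T - xx k t)^2 - (xx k t)^2 - WW k t * (1 - al k * (cos t)^2 - be k * (sin t)^2)"
    unfolding Phi_def by (simp add: algebra_simps power2_eq_square)
  then show ?thesis using disc[OF k, of t] by simp
qed

lemma WTp: "k > 0 \<Longrightarrow> WW k t * Tp k t = xx k t + ka k * w t"
  unfolding Tp_def using WW_pos[of k t] by simp

lemma Phi_Tp: "k > 0 \<Longrightarrow> Phi k t (Tp k t) = 0"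
proof -
  assume k: "k > 0"
  have "WW k t * Phi k t (Tp k t) = 0" unfolding W_Phi[OF k] WTp[OF k] by simp
  then show ?thesis using WW_pos[OF k, of t] by simp
qed

lemma root_unique: assumes k: "k > 0" and T: "T > 0" and P: "Phi k t T = 0"
  shows "T = Tp k t"
proof -
  have "(WW k t * T - xx k t)^2 = (ka k * w t)^2" using W_Phi[OF k, of t T] P by simp
  then have "WW k t * T - xx k t = ka k * w t \<or> WW k t * T - xx k t = - (ka k * w t)"
    by (simp add: power2_eq_iff)
  moreover have "WW k t * T > 0" using WW_pos[OF k] T by simp
  ultimately have "WW k t * T - xx k t = ka k * w t" using xx_lt[OF k, of t] kw_pos[OF k, of t] by auto
  then have "WW k t * T = WW k t * Tp k t" using WTp[OF k] by simp
  then show ?thesis using WW_pos[OF k, of t] by simp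
qed

lemma Phi_tau: assumes k: "k > 0"
  shows "Phi k (tau k t) (- Tp k t) = 0"
proof -
  define T where "T = Tp k t"
  define p where "p = 1 + T^2"
  define C' where "C' = cos t * (1 - T^2) - 2 * sin t * T"
  define S' where "S' = sin t * (1 - T^2) + 2 * cos t * T"
  have p: "p > 0" unfolding p_def by (simp add: add_pos_nonneg)
  have cs: "cos (tau k t) = C' / p" "sin (tau k t) = S' / p"
    unfolding tau_def T_def C'_def S'_def p_def by (simp_all add: cos_plus_2arctan sin_plus_2arctan)
  have "p^2 * Phi k (tau k t) (- T) = (al k * S'^2 + be k * C'^2) * T^2 + 2 * S' * C' * (al k - be k) * T + (al k * C'^2 + be k * S'^2) - p^2"
    unfolding Phi_def WW_def cs using p by (simp add: field_simps power2_eq_square)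
  also have "\<dots> = p^2 * Phi k t T"
    using alg_back[OF _ p_def C'_def S'_def, of "al k" "be k"] unfolding Phi_def WW_def by simp
  also have "\<dots> = 0" unfolding T_def Phi_Tp[OF k] by simp
  finally show ?thesis using p unfolding T_def by simp
qed

lemma back_lem: assumes k: "k > 0"
  shows "ka k * w (tau k t) = Tp k t * WW k (tau k t) + xx k (tau k t)"
proof -
  define s where "s = tau k t"
  define T where "T = Tp k t"
  have T: "T > 0" unfolding T_def using Tp_pos[OF k] .
  have "(WW k s * (- T) - xx k s)^2 = (ka k * w s)^2" using W_Phi[OF k, of s "- T"] Phi_tau[OF k, of t]
    unfolding s_def T_def by simp
  then have "WW k s * (- T) - xx k s = ka k * w s \<or> WW k s * (- T) - xx k s = - (ka k * w s)"
    by (simp only: power2_eq_iff)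
  then have "WW k s * T + xx k s = ka k * w s \<or> WW k s * T + xx k s = - (ka k * w s)"
    by (auto simp: algebra_simps)
  moreover have "WW k s * T + xx k s \<noteq> - (ka k * w s)"
  proof
    assume "WW k s * T + xx k s = - (ka k * w s)"
    then have "WW k s * (- T) = xx k s + ka k * w s" by simp
    then have "WW k s * (- T) = WW k s * Tp k s" using WTp[OF k] by simp
    then have "WW k s * (- T - Tp k s) = 0" by (simp add: algebra_simps)
    then have "- T = Tp k s" using WW_pos[OF k, of s] by simp
    then show False using Tp_pos[OF k, of s] T by simp
  qed
  ultimately have "WW k s * T + xx k s = ka k * w s" by blast
  then show ?thesis unfolding s_def T_def by (simp add: algebra_simps)
qed

end



context conf
begin

definition Phit :: "real \<Rightarrow> real \<Rightarrow> real" where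
  "Phit k t = 2 * (al k - be k) * (sin t * cos t * (Tp k t)^2 - ((cos t)^2 - (sin t)^2) * Tp k t - sin t * cos t)"

lemma w_arg_pos: "ac^2 * (sin t)^2 + bc^2 * (cos t)^2 > 0"
  using w_pos[of t] unfolding w_def by simp

lemma Tp_deriv_ex: assumes k: "k > 0" shows "\<exists>E. (Tp k has_real_derivative E) (at t)"
proof -
  have a: "ac^2 * (sin t)^2 + bc^2 * (cos t)^2 > 0" by (rule w_arg_pos)
  have b: "al k * (sin t)^2 + be k * (cos t)^2 \<noteq> 0" using WW_pos[OF k, of t] unfolding WW_def by simp
  show ?thesis unfolding Tp_def[abs_def] w_def WW_def
    using a b by (auto intro!: exI derivative_eq_intros)
qed

lemma Phi_comp_deriv: assumes k: "k > 0" and E: "(Tp k has_real_derivative E) (at t)"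
  shows "((\<lambda>x. Phi k x (Tp k x)) has_real_derivative
     (Phit k t + E * (2 * WW k t * Tp k t - 2 * xx k t))) (at t)"
  unfolding Phi_def WW_def Phit_def
  by (auto intro!: derivative_eq_intros E simp: algebra_simps power2_eq_square)

lemma Tp_deriv: assumes k: "k > 0"
  shows "(Tp k has_real_derivative (- Phit k t / (2 * (ka k * w t)))) (at t)"
proof -
  obtain E where E: "(Tp k has_real_derivative E) (at t)" using Tp_deriv_ex[OF k] by blast
  have D1: "((\<lambda>x. Phi k x (Tp k x)) has_real_derivative
     (Phit k t + E * (2 * WW k t * Tp k t - 2 * xx k t))) (at t)" by (rule Phi_comp_deriv[OF k E])
  have fz: "(\<lambda>x. Phi k x (Tp k x)) = (\<lambda>x. 0)" using Phi_Tp[OF k] by (simp add: fun_eq_iff)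
  have D0: "((\<lambda>x. Phi k x (Tp k x)) has_real_derivative 0) (at t)" unfolding fz by simp
  have h1: "Phit k t + E * (2 * WW k t * Tp k t - 2 * xx k t) = 0" using DERIV_unique[OF D1 D0] .
  have h2: "2 * WW k t * Tp k t - 2 * xx k t = 2 * (ka k * w t)" using WTp[OF k, of t] by simp
  have "Phit k t + E * (2 * (ka k * w t)) = 0" using h1 unfolding h2 .
  then have "E * (2 * (ka k * w t)) = - Phit k t" by linarith
  then have "E = - Phit k t / (2 * (ka k * w t))" using ka_pos[OF k] w_pos[of t] by (simp add: field_simps)
  then show ?thesis using E by simp
qed

lemma tau_deriv: assumes k: "k > 0"
  shows "(tau k has_real_derivative (w (tau k t) / w t)) (at t)"
proof -
  define T where "T = Tp k t"
  define p where "p = 1 + T^2"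
  define C' where "C' = cos t * (1 - T^2) - 2 * sin t * T"
  define S' where "S' = sin t * (1 - T^2) + 2 * cos t * T"
  have p: "p > 0" unfolding p_def by (simp add: add_pos_nonneg)
  have kw: "ka k * w t > 0" by (rule kw_pos[OF k])
  have D: "(tau k has_real_derivative (1 + 2 * (inverse (1 + T^2) * (- Phit k t / (2 * (ka k * w t)))))) (at t)"
    unfolding tau_def[abs_def] T_def by (auto intro!: derivative_eq_intros Tp_deriv[OF k])
  have cs: "cos (tau k t) = C' / p" "sin (tau k t) = S' / p"
    unfolding tau_def T_def C'_def S'_def p_def by (simp_all add: cos_plus_2arctan sin_plus_2arctan)
  have A: "((T * WW k t - xx k t) * p - Phit k t) * p = T * (al k * S'^2 + be k * C'^2) + S' * C' * (al k - be k)"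
    unfolding Phit_def WW_def T_def p_def C'_def S'_def by (rule alg_deriv)
  have B: "T * WW k (tau k t) + xx k (tau k t) = (T * (al k * S'^2 + be k * C'^2) + S' * C' * (al k - be k)) / p^2"
    unfolding WW_def cs using p by (simp add: field_simps power2_eq_square)
  have "ka k * w (tau k t) = T * WW k (tau k t) + xx k (tau k t)" using back_lem[OF k, of t] unfolding T_def by simp
  also have "\<dots> = ((T * WW k t - xx k t) * p - Phit k t) / p" unfolding B A[symmetric] using p by (simp add: power2_eq_square)
  also have "T * WW k t - xx k t = ka k * w t" using WTp[OF k, of t] unfolding T_def by (simp add: algebra_simps)
  finally have E: "ka k * w (tau k t) = ((ka k * w t) * p - Phit k t) / p" .
  have e1: "1 + 2 * (inverse (1 + T^2) * (- Phit k t / (2 * (ka k * w t)))) = 1 - Phit k t / (p * (ka k * w t))"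
  proof -
    have "2 * (inverse p * (- Phit k t / (2 * (ka k * w t)))) = - (Phit k t / (p * (ka k * w t)))"
      using p kw ka_pos[OF k] w_pos[of t] by (simp add: field_simps)
    then show ?thesis unfolding p_def[symmetric] by simp
  qed
  have e2: "((ka k * w t) * p - Phit k t) / p / (ka k * w t) = 1 - Phit k t / (p * (ka k * w t))"
  proof -
    have "((ka k * w t) * p - Phit k t) / p / (ka k * w t) = ((ka k * w t) * p - Phit k t) / (p * (ka k * w t))"
      by simp
    also have "\<dots> = (ka k * w t) * p / (p * (ka k * w t)) - Phit k t / (p * (ka k * w t))"
      by (rule diff_divide_distrib)
    also have "(ka k * w t) * p / (p * (ka k * w t)) = 1" using p ka_pos[OF k] w_pos[of t] by simp
    finally show ?thesis .
  qed
  have "1 + 2 * (inverse (1 + T^2) * (- Phit k t / (2 * (ka k * w t)))) = ((ka k * w t) * p - Phit k t) / p / (ka k * w t)"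
    unfolding e1 e2 ..
  also have "\<dots> = w (tau k t) / w t" unfolding E[symmetric] using ka_pos[OF k] w_pos[of t] by simp
  finally show ?thesis using D by simp
qed

end



context conf
begin

lemma w_cont: "isCont w x"
  unfolding w_def[abs_def] by (intro continuous_intros)

lemma U_exists: "\<exists>F. \<forall>x. (F has_real_derivative 1 / w x) (at x)"
proof -
  have "\<exists>F. \<forall>x :: real. (-\<infinity>::ereal) < x \<longrightarrow> x < (\<infinity>::ereal) \<longrightarrow> (F has_vector_derivative (1 / w x)) (at x)"
    by (rule einterval_antiderivative) (auto intro!: continuous_intros w_cont simp: w_pos[THEN less_imp_neq, symmetric])
  then show ?thesis by (auto simp: has_real_derivative_iff_has_vector_derivative)
qed

definition U :: "real \<Rightarrow> real" where "U = (SOME F. \<forall>x. (F has_real_derivative 1 / w x) (at x))"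

lemma U_deriv: "(U has_real_derivative 1 / w x) (at x)"
  using someI_ex[OF U_exists] unfolding U_def[symmetric] by blast

lemma U_cont: "isCont U x"
  using U_deriv DERIV_isCont by blast

lemma U_mono: assumes "x < y" shows "U x < U y"
proof (rule DERIV_pos_imp_increasing[OF assms])
  fix z show "\<exists>D. (U has_real_derivative D) (at z) \<and> D > 0"
    using U_deriv[of z] w_pos[of z] by auto
qed

lemma U_less_iff: "U x < U y \<longleftrightarrow> x < y"
  by (cases x y rule: linorder_cases) (auto dest: U_mono)
lemma U_le_iff: "U x \<le> U y \<longleftrightarrow> x \<le> y"
  by (cases x y rule: linorder_cases) (auto dest: U_mono)
lemma U_inj: "U x = U y \<Longrightarrow> x = y"
  by (cases x y rule: linorder_cases) (auto dest: U_mono)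

lemma U_IVT: assumes "a \<le> b" "U a \<le> y" "y \<le> U b" shows "\<exists>x. a \<le> x \<and> x \<le> b \<and> U x = y"
  using IVT'[of U a y b] assms U_cont by (auto intro!: continuous_at_imp_continuous_on)

lemma w_pi: "w (x + pi) = w x"
  unfolding w_def by simp

lemma U_pi: "U (x + pi) = U x + (U pi - U 0)"
proof -
  have "\<forall>y. ((\<lambda>x. U (x + pi) - U x) has_real_derivative 0) (at y)"
  proof
    fix y
    have "((\<lambda>x. U (x + pi) - U x) has_real_derivative (1 / w (y + pi) * 1 - 1 / w y)) (at y)"
      by (auto intro!: derivative_eq_intros DERIV_chain2[OF U_deriv] U_deriv)
    then show "((\<lambda>x. U (x + pi) - U x) has_real_derivative 0) (at y)" by (simp add: w_pi)
  qed
  from DERIV_isconst_all[OF this, of x 0] show ?thesis by simp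
qed

definition H :: real where "H = U pi - U 0"

lemma H_pos: "H > 0" unfolding H_def using U_mono[of 0 pi] by simp

lemma U_pi': "U (x + pi) = U x + H" unfolding H_def by (rule U_pi)

lemma U_nat_pi: "U (x + real n * pi) = U x + real n * H"
proof (induction n)
  case 0 then show ?case by simp
next
  case (Suc n)
  have "U (x + real (Suc n) * pi) = U ((x + real n * pi) + pi)" by (simp add: algebra_simps)
  also have "\<dots> = U (x + real n * pi) + H" by (rule U_pi')
  also have "\<dots> = U x + real (Suc n) * H" using Suc by (simp add: algebra_simps)
  finally show ?case .
qed

lemma U_int_pi: "U (x + of_int j * pi) = U x + of_int j * H"
proof (cases "j \<ge> 0")
  case True
  then obtain n where "j = int n" by (metis nonneg_eq_int)
  then show ?thesis using U_nat_pi by simp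
next
  case False
  then have "- j \<ge> 0" by simp
  then obtain n where "- j = int n" using nonneg_eq_int by blast
  then have n: "j = - int n" by simp
  have "U ((x + of_int j * pi) + real n * pi) = U (x + of_int j * pi) + real n * H" by (rule U_nat_pi)
  then show ?thesis using n by simp
qed

lemma tau_bounds: "k > 0 \<Longrightarrow> x < tau k x \<and> tau k x < x + pi"
  unfolding tau_def using Tp_pos[of k x] arctan_ubound[of "Tp k x"] by simp

lemma G_const: assumes k: "k > 0" shows "U (tau k x) - U x = U (tau k 0) - U 0"
proof -
  have "\<forall>y. ((\<lambda>x. U (tau k x) - U x) has_real_derivative 0) (at y)"
  proof
    fix y
    have "((\<lambda>x. U (tau k x) - U x) has_real_derivative (1 / w (tau k y) * (w (tau k y) / w y) - 1 / w y)) (at y)"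
      by (auto intro!: derivative_eq_intros DERIV_chain2[OF U_deriv] U_deriv tau_deriv[OF k])
    then show "((\<lambda>x. U (tau k x) - U x) has_real_derivative 0) (at y)" using w_pos[of "tau k y"] by simp
  qed
  from DERIV_isconst_all[OF this, of x 0] show ?thesis .
qed

end



lemma alg_circ: fixes c s T :: real shows "(c - s * T)^2 + (s + c * T)^2 = (c^2 + s^2) * (1 + T^2)"
  by (simp add: algebra_simps power2_eq_square)

context conf
begin

definition Xp :: "real \<Rightarrow> real \<Rightarrow> real \<times> real" where
  "Xp t T = (ac * (cos t - sin t * T), bc * (sin t + cos t * T))"
definition Ek :: "real \<Rightarrow> real \<times> real \<Rightarrow> bool" where
  "Ek k X \<longleftrightarrow> (fst X)^2 / (ac^2 + k) + (snd X)^2 / (bc^2 + k) = 1"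

lemma Ek_Xp: assumes k: "k > 0" shows "Ek k (Xp t T) \<longleftrightarrow> Phi k t T = 0"
proof -
  have "(fst (Xp t T))^2 / (ac^2 + k) + (snd (Xp t T))^2 / (bc^2 + k)
      = al k * (cos t - sin t * T)^2 + be k * (sin t + cos t * T)^2"
    unfolding Xp_def al_def be_def by (simp add: power_mult_distrib)
  also have "\<dots> = Phi k t T + 1" unfolding Phi_def WW_def by (simp add: algebra_simps power2_eq_square)
  finally show ?thesis unfolding Ek_def by simp
qed

lemma step_tau: assumes k: "k > 0" and xy: "x < y" "y < x + pi" and E: "Ek k (Xp x (tan ((y - x) / 2)))"
  shows "y = tau k x"
proof -
  have d: "0 < (y - x) / 2" "(y - x) / 2 < pi / 2" using xy by auto
  have T: "tan ((y - x) / 2) > 0" using d by (simp add: tan_gt_zero)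
  have "tan ((y - x) / 2) = Tp k x" using root_unique[OF k T] E Ek_Xp[OF k] by simp
  then have "arctan (Tp k x) = (y - x) / 2" using arctan_tan[of "(y - x) / 2"] d by simp
  then show ?thesis unfolding tau_def by simp
qed

lemma tan_tau: assumes k: "k > 0" shows "tan ((tau k x - x) / 2) = Tp k x"
  unfolding tau_def by (simp add: tan_arctan)

lemma chain: assumes k: "k > 0" and y: "y = tau k x" and z: "z = tau k y" and zx: "z - x < pi"
  shows "tan ((z - x) / 2) = 2 * (ka k * w y) / (al k + be k - 1)"
proof -
  have b1: "x < y" "y < x + pi" using tau_bounds[OF k, of x] y by auto
  have b2: "y < z" "z < y + pi" using tau_bounds[OF k, of y] z by auto
  define d1 where "d1 = (y - x) / 2"
  define d2 where "d2 = (z - y) / 2"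
  have dd: "(z - x) / 2 = d1 + d2" unfolding d1_def d2_def by (simp add: field_simps)
  have c1: "cos d1 \<noteq> 0" using b1 unfolding d1_def by (intro cos_gt_zero_pi[THEN less_imp_neq, symmetric]) auto
  have c2: "cos d2 \<noteq> 0" using b2 unfolding d2_def by (intro cos_gt_zero_pi[THEN less_imp_neq, symmetric]) auto
  have c12: "cos (d1 + d2) \<noteq> 0" using b1 b2 zx unfolding d1_def d2_def
    by (intro cos_gt_zero_pi[THEN less_imp_neq, symmetric]) (auto simp: field_simps)
  have t1: "tan d1 = Tp k x" unfolding d1_def y by (rule tan_tau[OF k])
  have t2: "tan d2 = Tp k y" unfolding d2_def z by (rule tan_tau[OF k])
  have W: "WW k y > 0" using WW_pos[OF k] .
  have bk: "ka k * w y = Tp k x * WW k y + xx k y" using back_lem[OF k, of x] y by simp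
  have T1: "Tp k x = (ka k * w y - xx k y) / WW k y" using bk W by (simp add: field_simps)
  have T2: "Tp k y = (xx k y + ka k * w y) / WW k y" using WTp[OF k, of y] W by (simp add: field_simps)
  have sum: "Tp k x + Tp k y = 2 * (ka k * w y) / WW k y" unfolding T1 T2 using W by (simp add: field_simps)
  have "Tp k x * Tp k y = ((ka k * w y)^2 - (xx k y)^2) / (WW k y)^2"
    unfolding T1 T2 using W by (simp add: field_simps power2_eq_square)
  also have "\<dots> = (1 - al k * (cos y)^2 - be k * (sin y)^2) / WW k y"
    unfolding disc[OF k] using W by (simp add: power2_eq_square)
  finally have prod: "1 - Tp k x * Tp k y = (al k + be k - 1) / WW k y"
  proof -
    assume p: "Tp k x * Tp k y = (1 - al k * (cos y)^2 - be k * (sin y)^2) / WW k y"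
    have a1: "al k * (sin y)^2 + al k * (cos y)^2 = al k" by (simp add: distrib_left[symmetric])
    have b1: "be k * (sin y)^2 + be k * (cos y)^2 = be k" by (simp add: distrib_left[symmetric])
    have e: "WW k y + al k * (cos y)^2 + be k * (sin y)^2 = al k + be k" unfolding WW_def using a1 b1 by linarith
    have "1 - Tp k x * Tp k y = (WW k y - (1 - al k * (cos y)^2 - be k * (sin y)^2)) / WW k y"
      unfolding p using W by (simp add: field_simps)
    also have "WW k y - (1 - al k * (cos y)^2 - be k * (sin y)^2) = al k + be k - 1" using e by simp
    finally show ?thesis .
  qed
  have "tan ((z - x) / 2) = (tan d1 + tan d2) / (1 - tan d1 * tan d2)"
    unfolding dd by (rule tan_add[OF c1 c2 c12])
  also have "\<dots> = (2 * (ka k * w y) / WW k y) / ((al k + be k - 1) / WW k y)"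
    unfolding t1 t2 sum prod ..
  also have "\<dots> = 2 * (ka k * w y) / (al k + be k - 1)" using W by simp
  finally show ?thesis .
qed

lemma ek_exists: assumes T: "T \<noteq> 0" shows "\<exists>k > 0. Ek k (Xp t T)"
proof -
  define X1 where "X1 = fst (Xp t T)"
  define X2 where "X2 = snd (Xp t T)"
  define f where "f k = X1^2 / (ac^2 + k) + X2^2 / (bc^2 + k)" for k
  define K where "K = X1^2 + X2^2 + 1"
  have K: "K > 0" unfolding K_def by (simp add: add_nonneg_pos)
  have f0: "f 0 = 1 + T^2"
  proof -
    have "f 0 = (cos t - sin t * T)^2 + (sin t + cos t * T)^2"
      unfolding f_def X1_def X2_def Xp_def using ac_pos bc_pos by (simp add: power_mult_distrib)
    also have "\<dots> = ((cos t)^2 + (sin t)^2) * (1 + T^2)" by (rule alg_circ)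
    also have "\<dots> = 1 + T^2" by simp
    finally show ?thesis .
  qed
  have f0': "1 \<le> f 0" unfolding f0 by simp
  have fK: "f K \<le> 1"
  proof -
    have pa': "0 < ac^2 + K" "0 < bc^2 + K" using K by (auto intro: add_nonneg_pos)
    have "X1^2 / (ac^2 + K) \<le> X1^2 / K" using K pa' by (intro divide_left_mono) auto
    moreover have "X2^2 / (bc^2 + K) \<le> X2^2 / K" using K pa' by (intro divide_left_mono) auto
    moreover have "X1^2 / K + X2^2 / K \<le> 1" using K unfolding K_def by (simp add: add_divide_distrib[symmetric])
    ultimately show ?thesis unfolding f_def by linarith
  qed
  have a2: "0 < ac^2" "0 < bc^2" using ac_pos bc_pos by auto
  have nz: "\<forall>x\<in>{0..K}. ac^2 + x \<noteq> 0" "\<forall>x\<in>{0..K}. bc^2 + x \<noteq> 0"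
  proof (safe)
    fix x assume "x \<in> {0..K}" then have "0 \<le> x" by simp
    then show "ac^2 + x = 0 \<Longrightarrow> False" "bc^2 + x = 0 \<Longrightarrow> False" using a2 by linarith+
  qed
  have cont: "continuous_on {0..K} f"
    unfolding f_def using nz by (intro continuous_intros) auto
  obtain k where k: "0 \<le> k" "k \<le> K" "f k = 1"
    using IVT2'[of f K 1 0] f0' fK K cont by auto
  have "k \<noteq> 0" using k(3) f0 T by auto
  then have "k > 0" using k by simp
  moreover have "Ek k (Xp t T)" unfolding Ek_def using k(3) unfolding f_def X1_def X2_def .
  ultimately show ?thesis by blast
qed

lemma w_nat_pi: "w (x + real n * pi) = w x"
proof (induction n)
  case (Suc n)
  have "w (x + real (Suc n) * pi) = w ((x + real n * pi) + pi)" by (simp add: algebra_simps)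
  then show ?case using w_pi Suc by simp
qed simp

lemma w_int_pi: "w (x + of_int j * pi) = w x"
proof (cases "j \<ge> 0")
  case True
  then obtain n where "j = int n" by (metis nonneg_eq_int)
  then show ?thesis using w_nat_pi by simp
next
  case False
  then have "- j \<ge> 0" by simp
  then obtain n where "- j = int n" using nonneg_eq_int by blast
  then have n: "j = - int n" by simp
  have "w ((x + of_int j * pi) + real n * pi) = w (x + of_int j * pi)" by (rule w_nat_pi)
  then show ?thesis using n by simp
qed

end



locale orbit = conf +
  fixes k :: real and th :: "int \<Rightarrow> real"
  assumes k_pos: "k > 0"
    and inc1: "\<And>i. th i < th (i + 1)"
    and inc2: "\<And>i. th (i + 1) < th i + pi"
    and onE: "\<And>i. Ek k (Xp (th i) (tan ((th (i + 1) - th i) / 2)))"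
begin

definition D :: real where "D = U (tau k 0) - U 0"
definition LL :: "int \<Rightarrow> real" where "LL i = tan ((th i - th (i - 1)) / 2) * w (th i)"
definition RR :: "int \<Rightarrow> real" where "RR i = tan ((th i - th (i - 1)) / 2) * w (th (i - 1))"

lemma step: "th (i + 1) = tau k (th i)"
  by (rule step_tau[OF k_pos inc1 inc2 onE])

lemma D_pos: "D > 0"
  unfolding D_def using tau_bounds[OF k_pos, of 0] U_mono by simp

lemma UD: "U (th (i + 1)) = U (th i) + D"
  using G_const[OF k_pos, of "th i"] step[of i] unfolding D_def by simp

lemma Un: "U (th (i + int n)) = U (th i) + real n * D"
proof (induction n)
  case 0 then show ?case by simp
next
  case (Suc n)
  have "th (i + int (Suc n)) = th ((i + int n) + 1)" by (simp add: algebra_simps)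
  then have "U (th (i + int (Suc n))) = U (th (i + int n)) + D" using UD by simp
  then show ?case using Suc by (simp add: algebra_simps)
qed

lemma th_shift: assumes "real n * D = of_int j * H" shows "th (i + int n) = th i + of_int j * pi"
proof -
  have "U (th (i + int n)) = U (th i + of_int j * pi)" using Un[of i n] U_int_pi[of "th i" j] assms by simp
  then show ?thesis by (rule U_inj)
qed

lemma LL_RR_shift: assumes "real n * D = of_int j * H"
  shows "LL (i + int n) = LL i" "RR (i + int n) = RR i"
proof -
  have a: "th (i + int n) = th i + of_int j * pi" by (rule th_shift[OF assms])
  have "th (i + int n - 1) = th ((i - 1) + int n)" by (simp add: algebra_simps)
  also have "\<dots> = th (i - 1) + of_int j * pi" by (rule th_shift[OF assms])
  finally have b: "th (i + int n - 1) = th (i - 1) + of_int j * pi" .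
  show "LL (i + int n) = LL i" unfolding LL_def a b by (simp add: w_int_pi)
  show "RR (i + int n) = RR i" unfolding RR_def a b by (simp add: w_int_pi)
qed

lemma period: assumes "cos (th (int N)) = cos (th 0)" "sin (th (int N)) = sin (th 0)"
  obtains m :: int where "real N * D = of_int (2 * m) * H"
proof -
  have "\<exists>m::int. th (int N) = th 0 + 2 * pi * of_int m" using sin_cos_eq_iff[of "th (int N)" "th 0"] assms by blast
  then obtain m :: int where m: "th (int N) = th 0 + 2 * pi * of_int m" by blast
  have "U (th (0 + int N)) = U (th 0) + real N * D" by (rule Un)
  moreover have "U (th 0 + of_int (2 * m) * pi) = U (th 0) + of_int (2 * m) * H" by (rule U_int_pi)
  moreover have "th 0 + of_int (2 * m) * pi = th (0 + int N)" using m by (simp add: algebra_simps)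
  ultimately have "real N * D = of_int (2 * m) * H" by simp
  then show ?thesis using that by blast
qed

lemma odd_case: assumes ND: "real (2 * n + 1) * D = of_int (2 * m) * H"
  shows "RR (i + int n) = LL (i - 1)"
proof -
  define b0 where "b0 = th (i - 2)"
  define b2 where "b2 = th (i - 1)"
  define c1 where "c1 = th (i + int n - 1) - of_int m * pi"
  define c3 where "c3 = th (i + int n) - of_int m * pi"
  define u where "u = U b2"
  have nD: "real n * D = of_int m * H - D / 2" using ND by (simp add: algebra_simps)
  have Ub0: "U b0 = u - D" unfolding b0_def u_def b2_def using UD[of "i - 2"] by simp
  have "U (th ((i - 1) + int n)) = U (th (i - 1)) + real n * D" by (rule Un)
  moreover have "i - 1 + int n = i + int n - 1" by simp
  ultimately have A: "U (th (i + int n - 1)) = u + real n * D" unfolding u_def b2_def by simp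
  have Um: "U (x - of_int m * pi) = U x - of_int m * H" for x
    using U_int_pi[of x "- m"] by simp
  have Uc1: "U c1 = u - D / 2" unfolding c1_def Um A nD by simp
  have "U (th ((i + int n - 1) + 1)) = U (th (i + int n - 1)) + D" by (rule UD)
  then have B: "U (th (i + int n)) = u + real n * D + D" using A by simp
  have Uc3: "U c3 = u + D / 2" unfolding c3_def Um B nD by simp
  have Dp: "D > 0" by (rule D_pos)
  have o1: "b0 < c1" using Ub0 Uc1 Dp U_less_iff[of b0 c1] by simp
  have o2: "c1 < b2" using Uc1 Dp U_less_iff[of c1 b2] unfolding u_def by simp
  have o3: "b2 < b0 + pi" using inc2[of "i - 2"] unfolding b0_def b2_def by simp
  have b2tau: "b2 = tau k b0" using step[of "i - 2"] unfolding b0_def b2_def by simp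
  have "th (i + int n - 1) < th (i + int n - 1 + 1)" "th (i + int n - 1 + 1) < th (i + int n - 1) + pi"
    using inc1 inc2 by blast+
  then have o4: "c1 < c3" "c3 < c1 + pi" unfolding c1_def c3_def by simp_all
  have c3tau: "c3 = tau k c1"
  proof -
    have "U (tau k c1) - U c1 = D" using G_const[OF k_pos, of c1] unfolding D_def .
    then have "U c3 = U (tau k c1)" using Uc1 Uc3 by linarith
    then show ?thesis by (rule U_inj)
  qed
  define T0 where "T0 = tan ((c1 - b0) / 2)"
  have "T0 > 0" unfolding T0_def using o1 o2 o3 by (intro tan_gt_zero) auto
  then have "T0 \<noteq> 0" by simp
  then obtain k' where k': "k' > 0" "Ek k' (Xp b0 T0)" using ek_exists[of T0 b0] by blast
  have o5: "c1 < b0 + pi" using o2 o3 by linarith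
  have c1tau: "c1 = tau k' b0"
    by (rule step_tau[OF k'(1) o1 o5]) (use k'(2) in \<open>simp add: T0_def\<close>)
  have Utb0: "U (tau k' b0) = u - D / 2" using Uc1 c1tau by simp
  have G': "U (tau k' x) = U x + D / 2" for x
  proof -
    have g1: "U (tau k' x) - U x = U (tau k' 0) - U 0" by (rule G_const[OF k'(1)])
    have g2: "U (tau k' b0) - U b0 = U (tau k' 0) - U 0" by (rule G_const[OF k'(1)])
    show ?thesis using g1 g2 Utb0 Ub0 by linarith
  qed
  have "U (tau k' c1) = U b2" using G'[of c1] Uc1 unfolding u_def by linarith
  then have t1: "tau k' c1 = b2" by (rule U_inj)
  have "U (tau k' b2) = U c3" using G'[of b2] Uc3 unfolding u_def by linarith
  then have t2: "tau k' b2 = c3" by (rule U_inj)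
  have ch1: "tan ((b2 - b0) / 2) = 2 * (ka k' * w c1) / (al k' + be k' - 1)"
    by (rule chain[OF k'(1) c1tau t1[symmetric]]) (use o3 in simp)
  have ch2: "tan ((c3 - c1) / 2) = 2 * (ka k' * w b2) / (al k' + be k' - 1)"
    by (rule chain[OF k'(1) t1[symmetric] t2[symmetric]]) (use o4 o2 o1 o3 in simp)
  have "RR (i + int n) = tan ((c3 - c1) / 2) * w c1"
  proof -
    have e1: "th (i + int n) - th (i + int n - 1) = c3 - c1" unfolding c1_def c3_def by simp
    have e2: "th (i + int n - 1) = c1 + of_int m * pi" unfolding c1_def by simp
    show ?thesis unfolding RR_def e1 by (simp add: e2 w_int_pi)
  qed
  also have "\<dots> = tan ((b2 - b0) / 2) * w b2" unfolding ch1 ch2 by (simp add: field_simps)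
  also have "\<dots> = LL (i - 1)" unfolding LL_def b0_def b2_def by (simp add: algebra_simps)
  finally show ?thesis .
qed

end



context orbit
begin

lemma core_result:
  assumes "cos (th (int N)) = cos (th 0)" "sin (th (int N)) = sin (th 0)"
  shows "(\<forall>n. N = 2 * n \<longrightarrow> (\<forall>i. RR (i + int n) = RR i \<and> LL (i + int n) = LL i)) \<and>
         (\<forall>n. N = 2 * n + 1 \<longrightarrow> (\<forall>i. RR (i + int n) = LL (i - 1) \<and> LL (i + int n) = RR i))"
proof -
  obtain m :: int where m: "real N * D = of_int (2 * m) * H" using period[OF assms] by blast
  have perN: "LL (i + int N) = LL i" "RR (i + int N) = RR i" for i
    using LL_RR_shift[OF m] by auto
  have ev: "RR (i + int n) = RR i \<and> LL (i + int n) = LL i" if "N = 2 * n" for n i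
  proof -
    have "real n * D = of_int m * H" using m that by (simp add: algebra_simps)
    then show ?thesis using LL_RR_shift by blast
  qed
  have od: "RR (i + int n) = LL (i - 1) \<and> LL (i + int n) = RR i" if "N = 2 * n + 1" for n i
  proof -
    have m': "real (2 * n + 1) * D = of_int (2 * m) * H" using m that by simp
    have a: "RR (i + int n) = LL (i - 1)" by (rule odd_case[OF m'])
    have "RR ((i + int n + 1) + int n) = LL ((i + int n + 1) - 1)" by (rule odd_case[OF m'])
    moreover have "(i + int n + 1) + int n = i + int N" using that by simp
    ultimately have "LL (i + int n) = RR (i + int N)" by simp
    then show ?thesis using a perN by simp
  qed
  show ?thesis using ev od by blast
qed

end



definition pol :: "real \<Rightarrow> real \<Rightarrow> real \<times> real \<Rightarrow> real \<times> real \<Rightarrow> real" where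
  "pol a b X Y = fst X * fst Y / a^2 + snd X * snd Y / b^2"

lemma pol_self: "on_ellipse a b X \<longleftrightarrow> pol a b X X = 1"
  unfolding on_ellipse_def pol_def by (simp add: power2_eq_square)

lemma tangent_polar:
  assumes a: "a \<noteq> 0" and b: "b \<noteq> 0" and AB: "A \<noteq> B" and T: "tangent_at a b (line_through A B) Q"
  shows "on_ellipse a b Q \<and> pol a b A Q = 1 \<and> pol a b B Q = 1"
proof -
  have QL: "Q \<in> line_through A B" and QE: "on_ellipse a b Q" using T unfolding tangent_at_def by auto
  obtain t0 where t0: "Q = A + t0 *\<^sub>R (B - A)" using QL unfolding line_through_def by auto
  define d where "d = B - A"
  have d0: "d \<noteq> 0" using AB unfolding d_def by simp
  define qd where "qd = pol a b Q d"
  define dd where "dd = pol a b d d"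
  have dd: "dd > 0"
  proof -
    have "fst d \<noteq> 0 \<or> snd d \<noteq> 0" using d0 by (simp add: prod_eq_iff)
    then show ?thesis unfolding dd_def pol_def using a b
      by (auto simp: add_pos_nonneg add_nonneg_pos power2_eq_square[symmetric])
  qed
  define s where "s = - 2 * qd / dd"
  have "Q + s *\<^sub>R d \<in> line_through A B" unfolding line_through_def t0 d_def
    by (rule CollectI, rule exI[of _ "t0 + s"]) (simp add: algebra_simps scaleR_add_left)
  moreover have "on_ellipse a b (Q + s *\<^sub>R d)"
  proof -
    have e1: "pol a b (Q + s *\<^sub>R d) (Q + s *\<^sub>R d) = pol a b Q Q + 2 * s * qd + s^2 * dd"
      unfolding qd_def dd_def pol_def by (simp add: algebra_simps power2_eq_square add_divide_distrib)
    have e2: "2 * s * qd + s^2 * dd = 0" unfolding s_def using dd by (simp add: field_simps power2_eq_square)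
    have "pol a b Q Q = 1" using QE pol_self by simp
    then have "pol a b (Q + s *\<^sub>R d) (Q + s *\<^sub>R d) = 1" using e1 e2 by linarith
    then show ?thesis using pol_self by simp
  qed
  ultimately have "Q + s *\<^sub>R d \<in> line_through A B \<inter> {X. on_ellipse a b X}" by simp
  then have "Q + s *\<^sub>R d = Q" using T unfolding tangent_at_def by simp
  then have "s = 0" using d0 by simp
  then have qd0: "qd = 0" unfolding s_def using dd by simp
  have QQ: "pol a b Q Q = 1" using QE pol_self by simp
  have A: "A = Q - t0 *\<^sub>R d" unfolding t0 d_def by simp
  have B: "B = Q + (1 - t0) *\<^sub>R d" unfolding t0 d_def by (simp add: algebra_simps)
  have "pol a b A Q = pol a b Q Q - t0 * qd" unfolding A qd_def pol_def by (simp add: algebra_simps diff_divide_distrib)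
  moreover have "pol a b B Q = pol a b Q Q + (1 - t0) * qd" unfolding B qd_def pol_def using a b by (simp add: field_simps)
  ultimately show ?thesis using QQ qd0 QE by simp
qed

lemma line_polar:
  assumes AB: "A \<noteq> B" and PA: "pol a b A Q = 1" and PB: "pol a b B Q = 1"
  shows "line_through A B = {X. pol a b X Q = 1}"
proof (intro set_eqI iffI)
  fix X assume "X \<in> line_through A B"
  then obtain t where X: "X = A + t *\<^sub>R (B - A)" unfolding line_through_def by auto
  have "pol a b X Q = pol a b A Q + t * (pol a b B Q - pol a b A Q)"
    unfolding X pol_def by (simp add: algebra_simps add_divide_distrib diff_divide_distrib)
  then show "X \<in> {X. pol a b X Q = 1}" using PA PB by simp
next
  fix X assume "X \<in> {X. pol a b X Q = 1}"
  then have PX: "pol a b X Q = 1" by simp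
  define n1 where "n1 = fst Q / a^2"
  define n2 where "n2 = snd Q / b^2"
  have pl: "pol a b Y Q = fst Y * n1 + snd Y * n2" for Y unfolding pol_def n1_def n2_def by simp
  define u where "u = X - A"
  define d where "d = B - A"
  have d0: "d \<noteq> 0" using AB unfolding d_def by simp
  have un: "fst u * n1 + snd u * n2 = 0" using PX PA unfolding u_def pl by (simp add: algebra_simps)
  have dn: "fst d * n1 + snd d * n2 = 0" using PB PA unfolding d_def pl by (simp add: algebra_simps)
  have n0: "n1 \<noteq> 0 \<or> n2 \<noteq> 0" using PA unfolding pl by auto
  have cr1: "(snd u * fst d - fst u * snd d) * n2 = 0"
  proof -
    have "(snd u * fst d - fst u * snd d) * n2 = fst d * (fst u * n1 + snd u * n2) - fst u * (fst d * n1 + snd d * n2)"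
      by (simp add: algebra_simps)
    then show ?thesis using un dn by simp
  qed
  have cr2: "(snd u * fst d - fst u * snd d) * n1 = 0"
  proof -
    have "(snd u * fst d - fst u * snd d) * n1 = snd u * (fst d * n1 + snd d * n2) - snd d * (fst u * n1 + snd u * n2)"
      by (simp add: algebra_simps)
    then show ?thesis using un dn by simp
  qed
  have cr: "snd u * fst d = fst u * snd d" using cr1 cr2 n0 by auto
  obtain t where "u = t *\<^sub>R d"
  proof (cases "fst d = 0")
    case True
    then have "snd d \<noteq> 0" using d0 by (simp add: prod_eq_iff)
    then have "u = (snd u / snd d) *\<^sub>R d" using cr True by (simp add: prod_eq_iff field_simps)
    then show ?thesis using that by blast
  next
    case False
    then have "u = (fst u / fst d) *\<^sub>R d" using cr by (simp add: prod_eq_iff field_simps)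
    then show ?thesis using that by blast
  qed
  then have "X = A + t *\<^sub>R (B - A)" unfolding u_def d_def by (simp add: algebra_simps)
  then show "X \<in> line_through A B" unfolding line_through_def by auto
qed




lemma alg_flip: fixes ca sa cd sd T :: real
  assumes h: "cd^2 + sd^2 = 1" and cd: "cd \<noteq> 0" and T: "T = sd / cd"
  shows "(ca * (cd^2 - sd^2) - sa * (2 * sd * cd)) + (sa * (cd^2 - sd^2) + ca * (2 * sd * cd)) * T = ca - sa * T"
    and "(sa * (cd^2 - sd^2) + ca * (2 * sd * cd)) - (ca * (cd^2 - sd^2) - sa * (2 * sd * cd)) * T = sa + ca * T"
proof -
  have "(ca * (cd^2 - sd^2) - sa * (2 * sd * cd)) * cd + (sa * (cd^2 - sd^2) + ca * (2 * sd * cd)) * sd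
        = (ca * cd - sa * sd) * (cd^2 + sd^2)" by (simp add: algebra_simps power2_eq_square)
  then have "(ca * (cd^2 - sd^2) - sa * (2 * sd * cd)) * cd + (sa * (cd^2 - sd^2) + ca * (2 * sd * cd)) * sd
        = (ca * cd - sa * sd)" using h by simp
  then show "(ca * (cd^2 - sd^2) - sa * (2 * sd * cd)) + (sa * (cd^2 - sd^2) + ca * (2 * sd * cd)) * T = ca - sa * T"
    unfolding T using cd by (simp add: field_simps)
  have "(sa * (cd^2 - sd^2) + ca * (2 * sd * cd)) * cd - (ca * (cd^2 - sd^2) - sa * (2 * sd * cd)) * sd
        = (sa * cd + ca * sd) * (cd^2 + sd^2)" by (simp add: algebra_simps power2_eq_square)
  then have "(sa * (cd^2 - sd^2) + ca * (2 * sd * cd)) * cd - (ca * (cd^2 - sd^2) - sa * (2 * sd * cd)) * sd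
        = (sa * cd + ca * sd)" using h by simp
  then show "(sa * (cd^2 - sd^2) + ca * (2 * sd * cd)) - (ca * (cd^2 - sd^2) - sa * (2 * sd * cd)) * T = sa + ca * T"
    unfolding T using cd by (simp add: field_simps)
qed

context conf
begin

definition Qc :: "real \<Rightarrow> real \<times> real" where "Qc t = (ac * cos t, bc * sin t)"

lemma Qc_Xp0: "Qc t = Xp t 0" unfolding Qc_def Xp_def by simp

lemma pol_Qc: "pol ac bc X (Qc t) = fst X * cos t / ac + snd X * sin t / bc"
  unfolding pol_def Qc_def using ac_pos bc_pos by (simp add: power2_eq_square)

lemma pol_Xp: "pol ac bc (Xp a T) (Qc a) = 1"
proof -
  have "pol ac bc (Xp a T) (Qc a) = (cos a - sin a * T) * cos a + (sin a + cos a * T) * sin a"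
    unfolding pol_Qc Xp_def using ac_pos bc_pos by simp
  also have "\<dots> = (sin a)^2 + (cos a)^2" by (simp add: algebra_simps power2_eq_square)
  finally show ?thesis by simp
qed

lemma Xp_flip: assumes cd: "cos d \<noteq> 0" shows "Xp (a + 2 * d) (- tan d) = Xp a (tan d)"
proof -
  have c2: "cos (a + 2 * d) = cos a * ((cos d)^2 - (sin d)^2) - sin a * (2 * sin d * cos d)"
    by (simp add: cos_add cos_double sin_double)
  have s2: "sin (a + 2 * d) = sin a * ((cos d)^2 - (sin d)^2) + cos a * (2 * sin d * cos d)"
    by (simp add: sin_add cos_double sin_double)
  have h: "(cos d)^2 + (sin d)^2 = 1" by simp
  have T: "tan d = sin d / cos d" by (simp add: tan_def)
  show ?thesis unfolding Xp_def c2 s2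
    using alg_flip[OF h cd T, where ca = "cos a" and sa = "sin a"] by simp
qed

lemma pol_Xp2: assumes cd: "cos d \<noteq> 0" shows "pol ac bc (Xp a (tan d)) (Qc (a + 2 * d)) = 1"
  using pol_Xp[of "a + 2 * d" "- tan d"] Xp_flip[OF cd] by simp

lemma pol_unique: assumes s: "sin (b - a) \<noteq> 0"
  and X: "pol ac bc X (Qc a) = 1" "pol ac bc X (Qc b) = 1"
  and Y: "pol ac bc Y (Qc a) = 1" "pol ac bc Y (Qc b) = 1"
  shows "X = Y"
proof -
  define u1 where "u1 = (fst X - fst Y) / ac"
  define u2 where "u2 = (snd X - snd Y) / bc"
  have g: "u1 * cos c + u2 * sin c = pol ac bc X (Qc c) - pol ac bc Y (Qc c)" for c
    unfolding pol_Qc u1_def u2_def by (simp add: diff_divide_distrib algebra_simps)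
  have e1: "u1 * cos a + u2 * sin a = 0" using X(1) Y(1) g[of a] by simp
  have e2: "u1 * cos b + u2 * sin b = 0" using X(2) Y(2) g[of b] by simp
  have d: "sin (b - a) = sin b * cos a - cos b * sin a" by (simp add: sin_diff)
  have "u1 * sin (b - a) = sin b * (u1 * cos a + u2 * sin a) - sin a * (u1 * cos b + u2 * sin b)"
    unfolding d by (simp add: algebra_simps)
  then have "u1 = 0" using e1 e2 s by simp
  moreover have "u2 * sin (b - a) = cos a * (u1 * cos b + u2 * sin b) - cos b * (u1 * cos a + u2 * sin a)"
    unfolding d by (simp add: algebra_simps)
  then have "u2 = 0" using e1 e2 s by simp
  ultimately show ?thesis unfolding u1_def u2_def using ac_pos bc_pos by (simp add: prod_eq_iff)
qed

lemma dist_Xp: "dist (Xp t T1) (Xp t T2) = \<bar>T1 - T2\<bar> * w t"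
proof -
  have "dist (Xp t T1) (Xp t T2) = sqrt ((ac * sin t * (T1 - T2))^2 + (bc * cos t * (T1 - T2))^2)"
    unfolding Xp_def dist_Pair_Pair dist_real_def by (simp add: algebra_simps power2_commute)
  also have "(ac * sin t * (T1 - T2))^2 + (bc * cos t * (T1 - T2))^2 = (T1 - T2)^2 * (w t)^2"
    unfolding w2 by (simp add: algebra_simps power2_eq_square)
  also have "sqrt \<dots> = \<bar>T1 - T2\<bar> * w t" using w_pos[of t] by (simp add: real_sqrt_mult)
  finally show ?thesis .
qed

lemma vieta_neg: assumes k: "k > 0" and x: "Ek k (Xp t x)" and y: "Ek k (Xp t y)" and xy: "x \<noteq> y"
  shows "x * y < 0"
proof -
  have px: "Phi k t x = 0" and py: "Phi k t y = 0" using x y Ek_Xp[OF k] by auto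
  define C where "C = al k * (cos t)^2 + be k * (sin t)^2 - 1"
  have C: "C < 0" unfolding C_def using lt_one[OF k, of t] by simp
  have W: "WW k t > 0" using WW_pos[OF k] .
  have "Phi k t x - Phi k t y = (x - y) * (WW k t * (x + y) - 2 * xx k t)"
    unfolding Phi_def by (simp add: algebra_simps power2_eq_square)
  then have s: "WW k t * (x + y) = 2 * xx k t" using px py xy by simp
  have "WW k t * x^2 - 2 * xx k t * x + C = 0" using px unfolding Phi_def C_def by (simp add: algebra_simps)
  then have "WW k t * x^2 - WW k t * (x + y) * x + C = 0" unfolding s[symmetric] by simp
  then have "WW k t * (x * y) = C" by (simp add: algebra_simps power2_eq_square)
  then have eq: "WW k t * (x * y) = C" .
  show ?thesis
  proof (rule ccontr)
    assume "\<not> x * y < 0"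
    then have "x * y \<ge> 0" by simp
    then have "WW k t * (x * y) \<ge> 0" using W by simp
    then show False using eq C by simp
  qed
qed

lemma Xp_refl: "Xp (- t) (- T) = (fst (Xp t T), - snd (Xp t T))"
  unfolding Xp_def by (simp add: algebra_simps)

lemma Ek_refl: "Ek k (fst X, - snd X) = Ek k X"
  unfolding Ek_def by simp

lemma w_neg: "w (- t) = w t" unfolding w_def by simp

lemma ellipse_angle: assumes "on_ellipse ac bc X" obtains t where "X = Qc t"
proof -
  have "(fst X / ac)^2 + (snd X / bc)^2 = 1" using assms unfolding on_ellipse_def by (simp add: power_divide)
  then obtain t where "fst X / ac = cos t" "snd X / bc = sin t" using sincos_total_2pi by metis
  then have "X = Qc t" unfolding Qc_def using ac_pos bc_pos by (simp add: prod_eq_iff field_simps)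
  then show ?thesis using that by blast
qed

end



lemma cumul_exists: fixes f :: "int \<Rightarrow> real" shows "\<exists>F. \<forall>i. F i - F (i - 1) = f i"
proof -
  define F where "F i = (if 0 \<le> i then (\<Sum>j\<in>{1..i}. f j) else - (\<Sum>j\<in>{i+1..0}. f j))" for i
  have "F i - F (i - 1) = f i" for i
  proof (cases "i \<ge> 1")
    case True
    have "{1..i} = insert i {1..i-1}" using True by auto
    then have "(\<Sum>j\<in>{1..i}. f j) = f i + (\<Sum>j\<in>{1..i-1}. f j)" by simp
    then show ?thesis unfolding F_def using True by simp
  next
    case False
    show ?thesis
    proof (cases "i = 0")
      case True then show ?thesis unfolding F_def by simp
    next
      case False
      then have i: "i < 0" using \<open>\<not> i \<ge> 1\<close> by simp
      have "{i..0} = insert i {i+1..0}" using i by auto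
      then have "(\<Sum>j\<in>{i..0}. f j) = f i + (\<Sum>j\<in>{i+1..0}. f j)" by simp
      then show ?thesis unfolding F_def using i by simp
    qed
  qed
  then show ?thesis by blast
qed

lemma sum_int_nat: "(\<Sum>i\<in>{1..int N}. g i) = (\<Sum>j<N. g (int j + 1))"
  by (rule sum.reindex_bij_witness[where i="\<lambda>j. int j + 1" and j="\<lambda>i. nat (i - 1)"]) auto

lemma sum_shift1: fixes f :: "int \<Rightarrow> real" assumes p: "\<And>i. f (i + int N) = f i"
  shows "(\<Sum>i=1..int N. f (i + 1)) = (\<Sum>i=1..int N. f i)"
proof -
  define h where "h j = f (int j + 1)" for j
  have "(\<Sum>i=1..int N. f (i + 1)) = (\<Sum>j<N. h (Suc j))" unfolding sum_int_nat h_def by (simp add: algebra_simps)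
  also have "\<dots> = (\<Sum>j<Suc N. h j) - h 0" unfolding sum.lessThan_Suc_shift by simp
  also have "\<dots> = (\<Sum>j<N. h j) + h N - h 0" by simp
  also have "h N = h 0" unfolding h_def using p[of 1] by (simp add: algebra_simps)
  finally show ?thesis unfolding sum_int_nat h_def by simp
qed

lemma sum_shift: fixes f :: "int \<Rightarrow> real" assumes p: "\<And>i. f (i + int N) = f i"
  shows "(\<Sum>i=1..int N. f (i + c)) = (\<Sum>i=1..int N. f i)"
proof (induction c rule: int_induct[where k = 0])
  case base then show ?case by simp
next
  case (step1 c)
  have "(\<Sum>i=1..int N. (\<lambda>i. f (i + c)) (i + 1)) = (\<Sum>i=1..int N. (\<lambda>i. f (i + c)) i)"
  proof (rule sum_shift1)
    fix i have "f ((i + c) + int N) = f (i + c)" by (rule p)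
    then show "f (i + int N + c) = f (i + c)" by (simp add: ac_simps)
  qed
  then show ?case using step1 by (simp add: algebra_simps)
next
  case (step2 c)
  have "(\<Sum>i=1..int N. (\<lambda>i. f (i + (c - 1))) (i + 1)) = (\<Sum>i=1..int N. (\<lambda>i. f (i + (c - 1))) i)"
  proof (rule sum_shift1)
    fix i have "f ((i + (c - 1)) + int N) = f (i + (c - 1))" by (rule p)
    then show "f (i + int N + (c - 1)) = f (i + (c - 1))" by (simp add: ac_simps)
  qed
  then show ?case using step2 by (simp add: algebra_simps)
qed

lemma sign_const: fixes T :: "int \<Rightarrow> real" assumes h: "\<And>i. T i * T (i + 1) > 0"
  shows "(\<forall>i. T i > 0) \<or> (\<forall>i. T i < 0)"
proof -
  have h': "T (i - 1) * T i > 0" for i using h[of "i - 1"] by simp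
  have T0: "T 0 \<noteq> 0" using h[of 0] by auto
  show ?thesis
  proof (cases "T 0 > 0")
    case True
    have "T i > 0" for i
    proof (induction i rule: int_induct[where k = 0])
      case base then show ?case using True by simp
    next
      case (step1 i) then show ?case using h[of i] by (simp add: zero_less_mult_iff)
    next
      case (step2 i) then show ?case using h'[of i] by (simp add: zero_less_mult_iff)
    qed
    then show ?thesis by blast
  next
    case False
    then have F: "T 0 < 0" using T0 by simp
    have "T i < 0" for i
    proof (induction i rule: int_induct[where k = 0])
      case base then show ?case using F by simp
    next
      case (step1 i) then show ?case using h[of i] by (simp add: zero_less_mult_iff)
    next
      case (step2 i) then show ?case using h'[of i] by (simp add: zero_less_mult_iff)
    qed
    then show ?thesis by blast
  qed
qed




context conf
begin

lemma angles:
  assumes k: "k > 0"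
    and onE: "\<And>i. Ek k (P i)"
    and neq: "\<And>i. P (i + 1) \<noteq> P i"
    and lines: "\<And>i. line_through (P (i - 1)) (P i) \<noteq> line_through (P i) (P (i + 1))"
    and tang: "\<And>i. tangent_at ac bc (line_through (P i) (P (i + 1))) (Q i)"
  obtains th :: "int \<Rightarrow> real" where
    "\<And>i. Q i = Qc (th i)"
    "\<And>i. - pi < th i - th (i - 1)" "\<And>i. th i - th (i - 1) < pi" "\<And>i. th i \<noteq> th (i - 1)"
    "\<And>i. P i = Xp (th (i - 1)) (tan ((th i - th (i - 1)) / 2))"
    "\<And>i. P i = Xp (th i) (- tan ((th i - th (i - 1)) / 2))"
proof -
  have acn: "ac \<noteq> 0" and bcn: "bc \<noteq> 0" using ac_pos bc_pos by auto
  have pol1: "pol ac bc (P i) (Q i) = 1" and pol2: "pol ac bc (P (i + 1)) (Q i) = 1"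
    and onc: "on_ellipse ac bc (Q i)" for i
    using tangent_polar[OF acn bcn neq[of i, symmetric] tang[of i]] by auto
  have pol2': "pol ac bc (P i) (Q (i - 1)) = 1" for i using pol2[of "i - 1"] by simp
  have "\<forall>i. \<exists>t. Q i = Qc t" using onc ellipse_angle by metis
  then obtain ph where ph: "\<And>i. Q i = Qc (ph i)" by metis
  have sn: "sin (ph i - ph (i - 1)) \<noteq> 0" for i
  proof
    assume s0: "sin (ph i - ph (i - 1)) = 0"
    define a where "a = ph i"
    define b where "b = ph (i - 1)"
    define lam where "lam = cos (a - b)"
    have l2: "lam^2 = 1" unfolding lam_def using s0 sin_cos_squared_add[of "a - b"] unfolding a_def b_def by simp
    have cb: "cos b = lam * cos a" unfolding lam_def
      using cos_diff[of a "a - b"] s0 unfolding a_def b_def by simp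
    have sb: "sin b = lam * sin a" unfolding lam_def
      using sin_diff[of a "a - b"] s0 unfolding a_def b_def by simp
    have QQ: "Q (i - 1) = lam *\<^sub>R Q i" unfolding ph Qc_def a_def[symmetric] b_def[symmetric] cb sb by simp
    have "lam = 1 \<or> lam = -1" using l2 by (simp add: power2_eq_1_iff)
    then show False
    proof
      assume "lam = 1"
      then have QQ1: "Q (i - 1) = Q i" using QQ by simp
      have "line_through (P (i - 1)) (P i) = {X. pol ac bc X (Q (i - 1)) = 1}"
        using line_polar[of "P (i - 1)" "P i"] neq[of "i - 1"] pol1[of "i - 1"] pol2'[of i] by fastforce
      moreover have "line_through (P i) (P (i + 1)) = {X. pol ac bc X (Q i) = 1}"
        using line_polar[of "P i" "P (i + 1)"] neq[of i] pol1[of i] pol2[of i] by fastforce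
      ultimately show False using lines[of i] QQ1 by simp
    next
      assume "lam = -1"
      then have "Q (i - 1) = - Q i" using QQ by simp
      then have "pol ac bc (P i) (Q (i - 1)) = - pol ac bc (P i) (Q i)" unfolding pol_def by simp
      then show False using pol1[of i] pol2'[of i] by simp
    qed
  qed
  define del where "del i = ph i - ph (i - 1) - 2 * pi * of_int (round ((ph i - ph (i - 1)) / (2 * pi)))" for i
  have del_bd: "\<bar>del i\<bar> \<le> pi" for i
  proof -
    define x where "x = ph i - ph (i - 1)"
    define r where "r = round (x / (2 * pi))"
    have "\<bar>of_int r - x / (2 * pi)\<bar> \<le> 1/2" unfolding r_def by (rule of_int_round_abs_le)
    then have "\<bar>2 * pi * (of_int r - x / (2 * pi))\<bar> \<le> pi" by (simp add: abs_mult)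
    moreover have "2 * pi * (of_int r - x / (2 * pi)) = 2 * pi * of_int r - x" by (simp add: field_simps)
    ultimately have "\<bar>2 * pi * of_int r - x\<bar> \<le> pi" by simp
    then show ?thesis unfolding del_def x_def[symmetric] r_def[symmetric] by (simp add: abs_minus_commute)
  qed
  have del_sin: "sin (del i) = sin (ph i - ph (i - 1))" for i
  proof -
    have "sin (ph i - ph (i - 1) + 2 * pi * of_int (- round ((ph i - ph (i - 1)) / (2 * pi)))) = sin (ph i - ph (i - 1))"
      using sin_cos_eq_iff by blast
    then show ?thesis unfolding del_def by (simp add: algebra_simps)
  qed
  have del_ne: "del i \<noteq> pi" "del i \<noteq> - pi" "del i \<noteq> 0" for i
    using sn[of i] del_sin[of i] by auto
  have del_bd2: "- pi < del i" "del i < pi" for i using del_bd[of i] del_ne[of i] by auto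
  obtain F where F: "\<And>i. F i - F (i - 1) = del i" using cumul_exists[of del] by blast
  define th where "th i = ph 0 - F 0 + F i" for i
  have thd: "th i - th (i - 1) = del i" for i unfolding th_def using F[of i] by simp
  have thph: "\<exists>q::int. th i = ph i + 2 * pi * of_int q" for i
  proof (induction i rule: int_induct[where k = 0])
    case base then show ?case unfolding th_def by (intro exI[of _ 0]) simp
  next
    case (step1 i)
    then obtain q :: int where q: "th i = ph i + 2 * pi * of_int q" by blast
    have "th (i + 1) = th i + del (i + 1)" using thd[of "i + 1"] by simp
    then have "th (i + 1) = ph (i + 1) + 2 * pi * of_int (q - round ((ph (i + 1) - ph i) / (2 * pi)))"
      unfolding q del_def by (simp add: algebra_simps)
    then show ?case by blast
  next
    case (step2 i)
    then obtain q :: int where q: "th i = ph i + 2 * pi * of_int q" by blast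
    have "th (i - 1) = th i - del i" using thd[of i] by simp
    then have "th (i - 1) = ph (i - 1) + 2 * pi * of_int (q + round ((ph i - ph (i - 1)) / (2 * pi)))"
      unfolding q del_def by (simp add: algebra_simps)
    then show ?case by blast
  qed
  have Qth: "Q i = Qc (th i)" for i
  proof -
    obtain q :: int where q: "th i = ph i + 2 * pi * of_int q" using thph by blast
    have "sin (th i) = sin (ph i) \<and> cos (th i) = cos (ph i)" unfolding q using sin_cos_eq_iff by blast
    then show ?thesis unfolding ph Qc_def by simp
  qed
  have cd: "cos ((th i - th (i - 1)) / 2) \<noteq> 0" for i
    unfolding thd using del_bd2[of i] by (intro cos_gt_zero_pi[THEN less_imp_neq, symmetric]) auto
  have PX: "P i = Xp (th (i - 1)) (tan ((th i - th (i - 1)) / 2))" for i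
  proof (rule pol_unique)
    show "sin (th i - th (i - 1)) \<noteq> 0" unfolding thd using del_sin sn by simp
    show "pol ac bc (P i) (Qc (th (i - 1))) = 1" using pol2'[of i] Qth[of "i - 1"] by simp
    show "pol ac bc (P i) (Qc (th i)) = 1" using pol1[of i] Qth[of i] by simp
    show "pol ac bc (Xp (th (i - 1)) (tan ((th i - th (i - 1)) / 2))) (Qc (th (i - 1))) = 1" by (rule pol_Xp)
    have "pol ac bc (Xp (th (i - 1)) (tan ((th i - th (i - 1)) / 2))) (Qc (th (i - 1) + 2 * ((th i - th (i - 1)) / 2))) = 1"
      by (rule pol_Xp2[OF cd])
    moreover have "th (i - 1) + 2 * ((th i - th (i - 1)) / 2) = th i" by (simp add: field_simps)
    ultimately show "pol ac bc (Xp (th (i - 1)) (tan ((th i - th (i - 1)) / 2))) (Qc (th i)) = 1" by metis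
  qed
  have PX2: "P i = Xp (th i) (- tan ((th i - th (i - 1)) / 2))" for i
  proof -
    have "Xp (th (i - 1) + 2 * ((th i - th (i - 1)) / 2)) (- tan ((th i - th (i - 1)) / 2)) = Xp (th (i - 1)) (tan ((th i - th (i - 1)) / 2))"
      by (rule Xp_flip[OF cd])
    moreover have "th (i - 1) + 2 * ((th i - th (i - 1)) / 2) = th i" by (simp add: field_simps)
    ultimately show ?thesis using PX[of i] by metis
  qed
  show ?thesis
  proof (rule that[of th])
    show "Q i = Qc (th i)" for i by (rule Qth)
    show "- pi < th i - th (i - 1)" "th i - th (i - 1) < pi" "th i \<noteq> th (i - 1)" for i
      using thd[of i] del_bd2[of i] del_ne[of i] by auto
    show "P i = Xp (th (i - 1)) (tan ((th i - th (i - 1)) / 2))" for i by (rule PX)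
    show "P i = Xp (th i) (- tan ((th i - th (i - 1)) / 2))" for i by (rule PX2)
  qed
qed

end



context conf
begin

lemma tan_half_pos: assumes "- pi < x" "x < pi" "tan (x / 2) > 0" shows "x > 0"
proof (rule ccontr)
  assume "\<not> x > 0"
  then have "x \<le> 0" by simp
  show False
  proof (cases "x = 0")
    case True then show False using assms by simp
  next
    case False
    then have "tan (x / 2) < 0" using \<open>x \<le> 0\<close> assms by (intro tan_less_zero) auto
    then show False using assms by simp
  qed
qed

lemma main_conf:
  assumes k: "k > 0"
    and onE: "\<And>i. Ek k (P i)"
    and neq: "\<And>i. P (i + 1) \<noteq> P i"
    and lines: "\<And>i. line_through (P (i - 1)) (P i) \<noteq> line_through (P i) (P (i + 1))"
    and tang: "\<And>i. tangent_at ac bc (line_through (P i) (P (i + 1))) (Q i)"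
    and perP: "\<And>i. P (i + int N) = P i"
  obtains th where "orbit ac bc k th" "cos (th (int N)) = cos (th 0)" "sin (th (int N)) = sin (th 0)"
    "\<And>i. dist (P i) (Q i) = tan ((th i - th (i - 1)) / 2) * w (th i)"
    "\<And>i. dist (P i) (Q (i - 1)) = tan ((th i - th (i - 1)) / 2) * w (th (i - 1))"
    "\<And>i. dist (P i) (P (i + 1)) = dist (P i) (Q i) + dist (P (i + 1)) (Q i)"
proof -
  obtain th where Qth: "\<And>i. Q i = Qc (th i)"
    and b1: "\<And>i. - pi < th i - th (i - 1)" and b2: "\<And>i. th i - th (i - 1) < pi"
    and bn: "\<And>i. th i \<noteq> th (i - 1)"
    and PX: "\<And>i. P i = Xp (th (i - 1)) (tan ((th i - th (i - 1)) / 2))"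
    and PX2: "\<And>i. P i = Xp (th i) (- tan ((th i - th (i - 1)) / 2))"
    using angles[OF k onE neq lines tang] by blast
  define T where "T i = tan ((th i - th (i - 1)) / 2)" for i
  have PXs: "P (i + 1) = Xp (th i) (T (i + 1))" for i using PX[of "i + 1"] unfolding T_def by simp
  have PX2s: "P i = Xp (th i) (- T i)" for i using PX2[of i] unfolding T_def by simp
  have TT: "T i * T (i + 1) > 0" for i
  proof -
    have ne: "- T i \<noteq> T (i + 1)"
    proof
      assume "- T i = T (i + 1)"
      then have "P i = P (i + 1)" using PXs[of i] PX2s[of i] by simp
      then show False using neq[of i] by simp
    qed
    have e1: "Ek k (Xp (th i) (- T i))" using onE[of i] PX2s[of i] by simp
    have e2: "Ek k (Xp (th i) (T (i + 1)))" using onE[of "i + 1"] PXs[of i] by simp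
    have "(- T i) * T (i + 1) < 0" by (rule vieta_neg[OF k e1 e2 ne])
    then show ?thesis by simp
  qed
  have QN: "Q (int N) = Q 0"
  proof -
    have "tangent_at ac bc (line_through (P 0) (P 1)) (Q (int N))"
      using tang[of "int N"] perP[of 0] perP[of 1] by (simp add: add.commute)
    then have "{Q (int N)} = {Q 0}" using tang[of 0] unfolding tangent_at_def by simp
    then show ?thesis by simp
  qed
  then have cs: "cos (th (int N)) = cos (th 0)" "sin (th (int N)) = sin (th 0)"
    using Qth[of "int N"] Qth[of 0] ac_pos bc_pos unfolding Qc_def by auto
  have d1: "dist (P i) (Q i) = \<bar>T i\<bar> * w (th i)" for i
    unfolding PX2s[of i] Qth Qc_Xp0 dist_Xp by simp
  have d2: "dist (P i) (Q (i - 1)) = \<bar>T i\<bar> * w (th (i - 1))" for i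
    using PXs[of "i - 1"] unfolding Qth Qc_Xp0 by (simp add: dist_Xp)
  have d3: "dist (P (i + 1)) (Q i) = \<bar>T (i + 1)\<bar> * w (th i)" for i
    unfolding PXs Qth Qc_Xp0 dist_Xp by simp
  have d4: "dist (P i) (P (i + 1)) = dist (P i) (Q i) + dist (P (i + 1)) (Q i)" for i
  proof -
    have "dist (P i) (P (i + 1)) = \<bar>- T i - T (i + 1)\<bar> * w (th i)"
      using PX2s[of i] PXs[of i] by (simp add: dist_Xp)
    also have "\<bar>- T i - T (i + 1)\<bar> = \<bar>T i\<bar> + \<bar>T (i + 1)\<bar>"
    proof -
      have "(T i > 0 \<and> T (i + 1) > 0) \<or> (T i < 0 \<and> T (i + 1) < 0)" using TT[of i] by (simp add: zero_less_mult_iff)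
      then show ?thesis by auto
    qed
    finally show ?thesis unfolding d1 d3 by (simp add: algebra_simps)
  qed
  have sgn: "(\<forall>i. T i > 0) \<or> (\<forall>i. T i < 0)" by (rule sign_const[of T, OF TT])
  then show ?thesis
  proof
    assume pos: "\<forall>i. T i > 0"
    have inc1: "th i < th (i + 1)" for i
    proof -
      have "T (i + 1) > 0" using pos by simp
      then have "tan ((th (i + 1) - th (i + 1 - 1)) / 2) > 0" unfolding T_def .
      then have "th (i + 1) - th (i + 1 - 1) > 0" using tan_half_pos[OF b1[of "i + 1"] b2[of "i + 1"]] by blast
      then show ?thesis by simp
    qed
    have orb: "orbit ac bc k th"
    proof (rule orbit.intro[OF conf_axioms], rule orbit_axioms.intro)
      show "k > 0" by (rule k)
      show "th i < th (i + 1)" for i by (rule inc1)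
      show "th (i + 1) < th i + pi" for i using b2[of "i + 1"] by simp
      show "Ek k (Xp (th i) (tan ((th (i + 1) - th i) / 2)))" for i
        using onE[of "i + 1"] PX[of "i + 1"] by simp
    qed
    have dd1: "dist (P i) (Q i) = tan ((th i - th (i - 1)) / 2) * w (th i)" for i
      using d1[of i] pos[rule_format, of i] unfolding T_def by simp
    have dd2: "dist (P i) (Q (i - 1)) = tan ((th i - th (i - 1)) / 2) * w (th (i - 1))" for i
      using d2[of i] pos[rule_format, of i] unfolding T_def by simp
    show ?thesis by (rule that[OF orb cs dd1 dd2 d4])
  next
    assume neg: "\<forall>i. T i < 0"
    define th' where "th' i = - th i" for i
    have Tn: "tan ((th' i - th' (i - 1)) / 2) = - T i" for i
    proof -
      have "(th' i - th' (i - 1)) / 2 = - ((th i - th (i - 1)) / 2)" unfolding th'_def by (simp add: field_simps)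
      then show ?thesis unfolding T_def by (simp only: tan_minus)
    qed
    have inc1: "th (i + 1) < th i" for i
    proof -
      have "tan ((th' (i + 1) - th' i) / 2) > 0" using Tn[of "i + 1"] neg[rule_format, of "i + 1"] by simp
      moreover have "- pi < th' (i + 1) - th' i" "th' (i + 1) - th' i < pi"
        using b1[of "i + 1"] b2[of "i + 1"] unfolding th'_def by auto
      ultimately have "th' (i + 1) - th' i > 0" using tan_half_pos by blast
      then show ?thesis unfolding th'_def by simp
    qed
    have orb: "orbit ac bc k th'"
    proof (rule orbit.intro[OF conf_axioms], rule orbit_axioms.intro)
      show "k > 0" by (rule k)
      show "th' i < th' (i + 1)" for i using inc1[of i] unfolding th'_def by simp
      show "th' (i + 1) < th' i + pi" for i using b1[of "i + 1"] unfolding th'_def by simp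
      show "Ek k (Xp (th' i) (tan ((th' (i + 1) - th' i) / 2)))" for i
      proof -
        have "Xp (th' i) (tan ((th' (i + 1) - th' i) / 2)) = Xp (- th i) (- T (i + 1))"
          using Tn[of "i + 1"] unfolding th'_def by simp
        also have "\<dots> = (fst (P (i + 1)), - snd (P (i + 1)))" unfolding Xp_refl PXs ..
        finally show ?thesis using onE[of "i + 1"] Ek_refl by simp
      qed
    qed
    have cs': "cos (th' (int N)) = cos (th' 0)" "sin (th' (int N)) = sin (th' 0)"
      using cs unfolding th'_def by auto
    have dd1: "dist (P i) (Q i) = tan ((th' i - th' (i - 1)) / 2) * w (th' i)" for i
      using d1[of i] neg[rule_format, of i] Tn[of i] unfolding th'_def by (simp add: w_neg)
    have dd2: "dist (P i) (Q (i - 1)) = tan ((th' i - th' (i - 1)) / 2) * w (th' (i - 1))" for i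
      using d2[of i] neg[rule_format, of i] Tn[of i] unfolding th'_def by (simp add: w_neg)
    show ?thesis by (rule that[OF orb cs' dd1 dd2 d4])
  qed
qed

end



theorem theorem4p5:
  fixes ac bc ke ae be :: real and P Q :: "int \<Rightarrow> real \<times> real" and N :: nat
    and l r :: "int \<Rightarrow> real"
  assumes "ac > bc" and "bc > 0" and "ke > 0"
    and "ae > 0" and "be > 0"
    and "ae^2 = ac^2 + ke" and "be^2 = bc^2 + ke"
    and "periodic_billiard ae be ac bc P N"
    and "\<And>i. tangent_at ac bc (line_through (P i) (P (i + 1))) (Q i)"
    and "\<And>i. l i = dist (P i) (Q i)"
    and "\<And>i. r i = dist (P i) (Q (i - 1))"
  shows "(\<forall>n. N = 2 * n \<longrightarrow> (\<forall>i. r (i + int n) = r i \<and> l (i + int n) = l i)) \<and>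
         (\<forall>n. N = 2 * n + 1 \<longrightarrow>
            (\<forall>i. r (i + int n) = l (i - 1) \<and> l (i + int n) = r i) \<and>
            (\<Sum>i=1..int N. l i) = (\<Sum>i=1..int N. dist (P i) (P (i + 1))) / 2 \<and>
            (\<Sum>i=1..int N. r i) = (\<Sum>i=1..int N. dist (P i) (P (i + 1))) / 2)"
proof -
  note A = assms
  interpret conf ac bc using A(1,2) by unfold_locales auto
  have ell: "on_ellipse ae be X \<longleftrightarrow> Ek ke X" for X
    unfolding on_ellipse_def Ek_def A(6) A(7) ..
  have pb: "billiard ae be ac bc P" and Npos: "N > 0" and perP: "\<And>i. P (i + int N) = P i"
    using A(8) unfolding periodic_billiard_def by auto
  have onE: "\<And>i. Ek ke (P i)" using pb ell unfolding billiard_def by auto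
  have neq: "\<And>i. P (i + 1) \<noteq> P i" using pb unfolding billiard_def by auto
  have lines: "\<And>i. line_through (P (i - 1)) (P i) \<noteq> line_through (P i) (P (i + 1))"
    using pb unfolding billiard_def by auto
  obtain th where orb: "orbit ac bc ke th" and cs: "cos (th (int N)) = cos (th 0)" "sin (th (int N)) = sin (th 0)"
    and dl: "\<And>i. dist (P i) (Q i) = tan ((th i - th (i - 1)) / 2) * w (th i)"
    and dr: "\<And>i. dist (P i) (Q (i - 1)) = tan ((th i - th (i - 1)) / 2) * w (th (i - 1))"
    and dP: "\<And>i. dist (P i) (P (i + 1)) = dist (P i) (Q i) + dist (P (i + 1)) (Q i)"
    using main_conf[OF A(3) onE neq lines A(9) perP] by blast
  interpret orbit ac bc ke th by (rule orb)
  have lL: "l i = LL i" for i unfolding A(10) dl LL_def ..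
  have rR: "r i = RR i" for i unfolding A(11) dr RR_def ..
  have core: "(\<forall>n. N = 2 * n \<longrightarrow> (\<forall>i. RR (i + int n) = RR i \<and> LL (i + int n) = LL i)) \<and>
         (\<forall>n. N = 2 * n + 1 \<longrightarrow> (\<forall>i. RR (i + int n) = LL (i - 1) \<and> LL (i + int n) = RR i))"
    by (rule core_result[OF cs])
  have Qper: "Q (i + int N) = Q i" for i
  proof -
    have "tangent_at ac bc (line_through (P i) (P (i + 1))) (Q (i + int N))"
      using A(9)[of "i + int N"] perP[of i] perP[of "i + 1"] by (simp add: algebra_simps)
    then have "{Q (i + int N)} = {Q i}" using A(9)[of i] unfolding tangent_at_def by simp
    then show ?thesis by simp
  qed
  have lper: "l (i + int N) = l i" for i unfolding A(10) using perP Qper by simp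
  have rper: "r (i + int N) = r i" for i
  proof -
    have "Q (i + int N - 1) = Q (i - 1)" using Qper[of "i - 1"] by (simp add: algebra_simps)
    then show ?thesis unfolding A(11) using perP by simp
  qed
  have part1: "\<forall>n. N = 2 * n \<longrightarrow> (\<forall>i. r (i + int n) = r i \<and> l (i + int n) = l i)"
    using core unfolding lL rR by blast
  have part2: "\<forall>n. N = 2 * n + 1 \<longrightarrow>
            (\<forall>i. r (i + int n) = l (i - 1) \<and> l (i + int n) = r i) \<and>
            (\<Sum>i=1..int N. l i) = (\<Sum>i=1..int N. dist (P i) (P (i + 1))) / 2 \<and>
            (\<Sum>i=1..int N. r i) = (\<Sum>i=1..int N. dist (P i) (P (i + 1))) / 2"
  proof (intro allI impI)
    fix n assume Nn: "N = 2 * n + 1"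
    have rl: "\<forall>i. r (i + int n) = l (i - 1) \<and> l (i + int n) = r i"
      using core Nn unfolding lL rR by blast
    have s1: "(\<Sum>i=1..int N. dist (P i) (P (i + 1))) = (\<Sum>i=1..int N. l i) + (\<Sum>i=1..int N. r (i + 1))"
      unfolding dP A(10) A(11) by (simp add: sum.distrib)
    have s2: "(\<Sum>i=1..int N. r (i + 1)) = (\<Sum>i=1..int N. r i)" by (rule sum_shift[of r, OF rper])
    have s3: "(\<Sum>i=1..int N. r i) = (\<Sum>i=1..int N. r (i + int n))" by (rule sum_shift[of r, OF rper, symmetric])
    also have "\<dots> = (\<Sum>i=1..int N. l (i + - 1))" using rl by simp
    also have "\<dots> = (\<Sum>i=1..int N. l i)" by (rule sum_shift[of l, OF lper])
    finally have s4: "(\<Sum>i=1..int N. r i) = (\<Sum>i=1..int N. l i)" .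
    show "(\<forall>i. r (i + int n) = l (i - 1) \<and> l (i + int n) = r i) \<and>
            (\<Sum>i=1..int N. l i) = (\<Sum>i=1..int N. dist (P i) (P (i + 1))) / 2 \<and>
            (\<Sum>i=1..int N. r i) = (\<Sum>i=1..int N. dist (P i) (P (i + 1))) / 2"
      using rl s1 s2 s4 by simp
  qed
  show ?thesis using part1 part2 by blast
qed



end
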